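(* Let $\mathcal{B}=(T,\bowtie)$ be a block and $\mathcal S$ a valid schedule of $\mathcal{B}$. For $v\in T$ let $c(v)$ be the number of vertices of a longest directed path in $(T,\mathcal S)$ ending at $v$, let $k=\max_{v\in T}c(v)$, and let $T_i=\{v\in T: c(v)=i\}$ for $i=1,\dots,k$. Then $c$ is a proper vertex coloring of the conflict graph $(T,\bowtie)$, and $(T_1,\dots,T_k)$ is a legal partition of $T$ consisting of $k$ nonempty sets.
   Context: A block consists of a finite set $T$ of transactions with a symmetric irreflexive conflict relation $\bowtie$; its conflict graph is the undirected graph $(T,\bowtie)$. A schedule is a set $\mathcal S\subseteq T\times T$ such that the directed graph $(T,\mathcal S)$ is acyclic; it is valid if for every pair $tx\bowtie tx'$ the graph $(T,\mathcal S)$ contains a directed path from $tx$ to $tx'$ or from $tx'$ to $tx$. A set is conflict-free if no two of its elements conflict; a legal partition of $T$ is an ordered sequence of pairwise disjoint conflict-free sets whose union is $T$. *)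

theory Defs
  imports Main
begin

definition block :: "'a set \<Rightarrow> ('a \<Rightarrow> 'a \<Rightarrow> bool) \<Rightarrow> bool" where
  "block T conf \<longleftrightarrow> finite T \<and> (\<forall>x y. conf x y \<longrightarrow> conf y x) \<and> (\<forall>x. \<not> conf x x)
     \<and> (\<forall>x y. conf x y \<longrightarrow> x \<in> T \<and> y \<in> T)"

definition schedule :: "'a set \<Rightarrow> ('a \<times> 'a) set \<Rightarrow> bool" where
  "schedule T S \<longleftrightarrow> S \<subseteq> T \<times> T \<and> acyclic S"

definition valid_schedule :: "'a set \<Rightarrow> ('a \<Rightarrow> 'a \<Rightarrow> bool) \<Rightarrow> ('a \<times> 'a) set \<Rightarrow> bool" where
  "valid_schedule T conf S \<longleftrightarrow> schedule T S \<and>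
     (\<forall>x y. conf x y \<longrightarrow> (x, y) \<in> S\<^sup>+ \<or> (y, x) \<in> S\<^sup>+)"

definition dpath :: "'a set \<Rightarrow> ('a \<times> 'a) set \<Rightarrow> 'a list \<Rightarrow> bool" where
  "dpath T S p \<longleftrightarrow> p \<noteq> [] \<and> distinct p \<and> set p \<subseteq> T \<and>
     (\<forall>i. Suc i < length p \<longrightarrow> (p ! i, p ! Suc i) \<in> S)"

definition longest_path_count :: "'a set \<Rightarrow> ('a \<times> 'a) set \<Rightarrow> 'a \<Rightarrow> nat" where
  "longest_path_count T S v = Max {length p | p. dpath T S p \<and> last p = v}"

definition conflict_free :: "('a \<Rightarrow> 'a \<Rightarrow> bool) \<Rightarrow> 'a set \<Rightarrow> bool" where
  "conflict_free conf A \<longleftrightarrow> (\<forall>x\<in>A. \<forall>y\<in>A. \<not> conf x y)"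

definition legal_partition :: "'a set \<Rightarrow> ('a \<Rightarrow> 'a \<Rightarrow> bool) \<Rightarrow> 'a set list \<Rightarrow> bool" where
  "legal_partition T conf Ps \<longleftrightarrow>
     (\<forall>i j. i < length Ps \<longrightarrow> j < length Ps \<longrightarrow> i \<noteq> j \<longrightarrow> Ps ! i \<inter> Ps ! j = {}) \<and>
     (\<forall>A\<in>set Ps. conflict_free conf A) \<and> \<Union>(set Ps) = T"

definition proper_coloring :: "'a set \<Rightarrow> ('a \<Rightarrow> 'a \<Rightarrow> bool) \<Rightarrow> ('a \<Rightarrow> 'b) \<Rightarrow> bool" where
  "proper_coloring T conf c \<longleftrightarrow> (\<forall>x\<in>T. \<forall>y\<in>T. conf x y \<longrightarrow> c x \<noteq> c y)"

end

theory Submission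
  imports Defs
begin

lemma lp_fin:
  assumes "finite T"
  shows "finite {length p | p. dpath T S p \<and> last p = v}"
proof (rule finite_subset[of _ "{..card T}"])
  show "{length p | p. dpath T S p \<and> last p = v} \<subseteq> {..card T}"
  proof
    fix n assume "n \<in> {length p | p. dpath T S p \<and> last p = v}"
    then obtain p where p: "dpath T S p" "n = length p" by blast
    then have "length p = card (set p)" by (simp add: dpath_def distinct_card)
    also have "\<dots> \<le> card T" using p assms by (intro card_mono) (auto simp: dpath_def)
    finally show "n \<in> {..card T}" using p by simp
  qed
qed simp

lemma lp_ge:
  assumes "finite T" "dpath T S p" "last p = v"
  shows "length p \<le> longest_path_count T S v"
  unfolding longest_path_count_def using assms lp_fin[OF assms(1)]
  by (intro Max_ge) auto

lemma lp_single: "v \<in> T \<Longrightarrow> dpath T S [v]"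
  by (simp add: dpath_def)

lemma lp_ex:
  assumes "finite T" "v \<in> T"
  shows "\<exists>p. dpath T S p \<and> last p = v \<and> length p = longest_path_count T S v"
proof -
  have ne: "{length p | p. dpath T S p \<and> last p = v} \<noteq> {}"
    using lp_single[OF assms(2), of S] by force
  have "longest_path_count T S v \<in> {length p | p. dpath T S p \<and> last p = v}"
    unfolding longest_path_count_def using Max_in[OF lp_fin[OF assms(1)] ne] .
  then show ?thesis by auto
qed

lemma lp_pos:
  assumes "finite T" "v \<in> T"
  shows "1 \<le> longest_path_count T S v"
  using lp_ge[OF assms(1) lp_single[OF assms(2)], of v] by simp

lemma dpath_rtr:
  assumes "dpath T S p" "i \<le> j" "j < length p"
  shows "(p ! i, p ! j) \<in> S\<^sup>*"
  using assms(2,3)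
proof (induction j)
  case 0 then show ?case by simp
next
  case (Suc j)
  show ?case
  proof (cases "i = Suc j")
    case True then show ?thesis by simp
  next
    case False
    then have "(p ! i, p ! j) \<in> S\<^sup>*" using Suc by simp
    moreover have "(p ! j, p ! Suc j) \<in> S" using assms(1) Suc.prems by (simp add: dpath_def)
    ultimately show ?thesis by simp
  qed
qed

lemma dpath_snoc:
  assumes "schedule T S" "dpath T S p" "last p = u" "(u, v) \<in> S"
  shows "dpath T S (p @ [v])"
proof -
  have vT: "v \<in> T" using assms(1,4) by (auto simp: schedule_def)
  have "v \<notin> set p"
  proof
    assume "v \<in> set p"
    then obtain i where i: "i < length p" "p ! i = v" by (auto simp: in_set_conv_nth)
    have pne: "p \<noteq> []" using assms(2) by (simp add: dpath_def)
    have "i \<le> length p - 1" "length p - 1 < length p" using i by auto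
    then have "(p ! i, p ! (length p - 1)) \<in> S\<^sup>*" using dpath_rtr[OF assms(2)] by blast
    moreover have "p ! (length p - 1) = u" using assms(3) pne by (simp add: last_conv_nth)
    ultimately have "(v, u) \<in> S\<^sup>*" using i by simp
    then have "(u, u) \<in> S\<^sup>+" using assms(4) by simp
    then show False using assms(1) by (auto simp: schedule_def acyclic_def)
  qed
  moreover have "\<forall>i. Suc i < length (p @ [v]) \<longrightarrow> ((p @ [v]) ! i, (p @ [v]) ! Suc i) \<in> S"
  proof (intro allI impI)
    fix i assume h: "Suc i < length (p @ [v])"
    show "((p @ [v]) ! i, (p @ [v]) ! Suc i) \<in> S"
    proof (cases "Suc i < length p")
      case True then show ?thesis using assms(2) by (simp add: dpath_def nth_append)
    next
      case False
      then have e: "i = length p - 1" "Suc i = length p" using h by auto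
      have pne: "p \<noteq> []" using assms(2) by (simp add: dpath_def)
      have "p ! (length p - 1) = u" using assms(3) pne by (simp add: last_conv_nth)
      then show ?thesis using e assms(4) pne by (simp add: nth_append)
    qed
  qed
  ultimately show ?thesis using assms(2) vT by (auto simp: dpath_def)
qed

lemma lp_step:
  assumes "finite T" "schedule T S" "(u, v) \<in> S"
  shows "longest_path_count T S u < longest_path_count T S v"
proof -
  have uT: "u \<in> T" using assms(2,3) by (auto simp: schedule_def)
  obtain p where p: "dpath T S p" "last p = u" "length p = longest_path_count T S u"
    using lp_ex[OF assms(1) uT] by blast
  have "length (p @ [v]) \<le> longest_path_count T S v"
    using lp_ge[OF assms(1) dpath_snoc[OF assms(2) p(1,2) assms(3)]] by simp
  then show ?thesis using p by simp
qed

lemma lp_trancl: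
  assumes "finite T" "schedule T S" "(u, v) \<in> S\<^sup>+"
  shows "longest_path_count T S u < longest_path_count T S v"
  using assms(3)
proof (induction rule: trancl_induct)
  case (base y) then show ?case using lp_step[OF assms(1,2)] by blast
next
  case (step y z) then show ?case using lp_step[OF assms(1,2), of y z] by simp
qed

lemma lp_down:
  assumes "finite T" "schedule T S" "v \<in> T" "longest_path_count T S v = m" "2 \<le> m"
  shows "\<exists>u\<in>T. longest_path_count T S u = m - 1"
proof -
  obtain p where p: "dpath T S p" "last p = v" "length p = m"
    using lp_ex[OF assms(1,3)] assms(4) by blast
  define u where "u = p ! (m - 2)"
  have "p \<noteq> []" using p assms(5) by auto
  then have "p ! (m - 1) = v" using p by (simp add: last_conv_nth)
  moreover have "(p ! (m - 2), p ! Suc (m - 2)) \<in> S" using p(1) p(3) assms(5)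
    by (simp add: dpath_def)
  moreover have "Suc (m - 2) = m - 1" using assms(5) by simp
  ultimately have uv: "(u, v) \<in> S" unfolding u_def by simp
  have uT: "u \<in> T" using p assms(5) unfolding u_def dpath_def by auto
  have tp: "dpath T S (take (m - 1) p)"
    using p(1) assms(5) p(3) unfolding dpath_def
    by (auto dest: in_set_takeD)
  have tne: "take (m - 1) p \<noteq> []" using p(3) assms(5) by (cases p) auto
  have "last (take (m - 1) p) = take (m - 1) p ! (m - 2)"
    using tne p(3) assms(5) by (simp add: last_conv_nth numeral_2_eq_2)
  also have "\<dots> = u" unfolding u_def using assms(5) by simp
  finally have "last (take (m - 1) p) = u" .
  then have "m - 1 \<le> longest_path_count T S u"
    using lp_ge[OF assms(1) tp] p(3) by simp
  moreover have "longest_path_count T S u < m"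
    using lp_step[OF assms(1,2) uv] assms(4) by simp
  ultimately show ?thesis using uT by (intro bexI[of _ u]) auto
qed

lemma lp_all:
  assumes "finite T" "schedule T S" "v \<in> T" "longest_path_count T S v = m" "1 \<le> j" "j \<le> m"
  shows "\<exists>u\<in>T. longest_path_count T S u = j"
  using assms(3,4,6)
proof (induction "m - j" arbitrary: v m)
  case 0 then show ?case by auto
next
  case (Suc d)
  then have "2 \<le> m" using assms(5) by simp
  then obtain u where "u \<in> T" "longest_path_count T S u = m - 1"
    using lp_down[OF assms(1,2) Suc.prems(1,2)] by blast
  then show ?case using Suc by (metis Suc_diff_Suc diff_Suc_1 diff_diff_left
      diff_le_mono Suc_leI not_less_eq_eq add_diff_cancel_left' plus_1_eq_Suc nat.inject
      zero_less_Suc zero_less_diff le_diff_conv2 Suc_le_eq diff_is_0_eq)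
qed

theorem lemma3:
  fixes T :: "'a set" and conf :: "'a \<Rightarrow> 'a \<Rightarrow> bool" and S :: "('a \<times> 'a) set"
  assumes "block T conf" and "valid_schedule T conf S" and "T \<noteq> {}"
  defines "c \<equiv> longest_path_count T S"
  defines "k \<equiv> Max (c ` T)"
  defines "Ts \<equiv> map (\<lambda>i. {v \<in> T. c v = i}) [1..<k+1]"
  shows "proper_coloring T conf c \<and> legal_partition T conf Ts \<and> length Ts = k
         \<and> (\<forall>A\<in>set Ts. A \<noteq> {})"
proof -
  have fT: "finite T" using assms(1) by (simp add: block_def)
  have sch: "schedule T S" using assms(2) by (simp add: valid_schedule_def)
  have neq: "c x \<noteq> c y" if "conf x y" for x y
  proof -
    have "(x, y) \<in> S\<^sup>+ \<or> (y, x) \<in> S\<^sup>+" using assms(2) that by (simp add: valid_schedule_def)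
    then show ?thesis using lp_trancl[OF fT sch] unfolding c_def by (metis less_irrefl)
  qed
  have pc: "proper_coloring T conf c" using neq by (simp add: proper_coloring_def)
  have kmax: "c v \<le> k" if "v \<in> T" for v unfolding k_def using fT that by simp
  obtain w where w: "w \<in> T" "c w = k" unfolding k_def using fT assms(3)
    by (metis (mono_tags, lifting) Max_in finite_imageI image_iff image_is_empty)
  have disj: "\<forall>i j. i < length Ts \<longrightarrow> j < length Ts \<longrightarrow> i \<noteq> j \<longrightarrow> Ts ! i \<inter> Ts ! j = {}"
  proof (intro allI impI)
    fix i j assume h: "i < length Ts" "j < length Ts" "i \<noteq> j"
    have "length Ts = k" unfolding Ts_def by simp
    then have "Ts ! i = {v \<in> T. c v = i + 1}" "Ts ! j = {v \<in> T. c v = j + 1}"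
      using h unfolding Ts_def by (simp_all add: nth_map del: upt_Suc)
    then show "Ts ! i \<inter> Ts ! j = {}" using h(3) by auto
  qed
  have cf: "\<forall>A\<in>set Ts. conflict_free conf A"
    unfolding Ts_def conflict_free_def using neq by (auto simp del: upt_Suc) metis+
  have un: "\<Union>(set Ts) = T"
  proof
    show "\<Union>(set Ts) \<subseteq> T" unfolding Ts_def by auto
    show "T \<subseteq> \<Union>(set Ts)"
    proof
      fix v assume v: "v \<in> T"
      have "1 \<le> c v" using lp_pos[OF fT v] unfolding c_def .
      moreover have "c v \<le> k" using kmax v .
      ultimately show "v \<in> \<Union>(set Ts)" unfolding Ts_def using v by auto
    qed
  qed
  have ne: "\<forall>A\<in>set Ts. A \<noteq> {}"
  proof
    fix A assume "A \<in> set Ts"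
    then obtain j where j: "1 \<le> j" "j \<le> k" "A = {v \<in> T. c v = j}" unfolding Ts_def by auto
    obtain u where "u \<in> T" "c u = j"
      using lp_all[OF fT sch w(1) _ j(1,2)] w(2) unfolding c_def by blast
    then show "A \<noteq> {}" using j(3) by auto
  qed
  show ?thesis using pc disj cf un ne by (simp add: legal_partition_def Ts_def)
qed

end
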